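(* Let $M$ be a matroid on $E=[n]$, $t,u$ positive integers, $\mathcal F$ the regular mixed subdivision defined below. Let $(X_1,Y_1)$ and $(X_2,Y_2)$ be two distinct ordered partitions of $[n]\setminus\{1\}$ into two (possibly empty) blocks, and for $k=1,2$ let $B_k$ be the unique basis such that $T_k=\mathbf e_{B_k}+u\Delta_{\{1\}\cup X_k}+t\nabla_{\{1\}\cup Y_k}$ is a top-degree face of $\mathcal F$. If $T_1\cap T_2\neq\emptyset$, then $B_1=B_2$.
   Context: $M$ is a matroid on $E=[n]=\{1,\dots,n\}$. $P(M)\subseteq\mathbb R^E$ is the convex hull of the indicator vectors $\mathbf e_B$ of bases $B$. For nonempty $S\subseteq E$, $\Delta_S=\operatorname{conv}\{\mathbf e_i:i\in S\}$, $\nabla_S=-\Delta_S$, $\Delta=\Delta_E$, $\nabla=\nabla_E$. The subdivision: fix reals $0<\alpha_1<\dots<\alpha_n$, $0<\beta_1<\dots<\beta_n$; let $\mathit{Lift}=\operatorname{conv}\{(u\mathbf e_i,\alpha_i)\}+(P(M)\times\{0\})+\operatorname{conv}\{(-t\mathbf e_i,\beta_i)\}\subseteq\mathbb R^E\times\mathbb R$. The lower faces of $\mathit{Lift}$ are the faces on which some linear functional with last coordinate $-1$ attains its maximum; their projections to $\mathbb R^E$ form the regular mixed subdivision $\mathcal F$ of $u\Delta+P(M)+t\nabla$. Each cell is canonically written $F+G+H$ (projections of the faces of the three summands of $\mathit{Lift}$ maximizing the same functional), with $F$ a face of $u\Delta$, $G$ a face of $P(M)$, $H$ a face of $t\nabla$.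 A top-degree face is a maximal cell $F+G+H$ of $\mathcal F$ with $G$ a vertex of $P(M)$. For each $X,Y$ with $X\cup Y=E$, $X\cap Y=\{1\}$ there is a unique basis $B$ such that $u\Delta_X+\mathbf e_B+t\nabla_Y$ is a top-degree face. *)

theory Defs
  imports "HOL-Analysis.Analysis" "HOL-Library.Function_Algebras"
begin

section \<open>Vectors in R^E, E = [n], as functions nat => real (pointwise real vector space)\<close>

instantiation "fun" :: (type, real_vector) real_vector
begin
definition scaleR_fun :: "real \<Rightarrow> ('a \<Rightarrow> 'b) \<Rightarrow> 'a \<Rightarrow> 'b"
  where "scaleR_fun r f = (\<lambda>x. r *\<^sub>R f x)"
instance
  by standard (auto simp: scaleR_fun_def fun_eq_iff scaleR_add_right scaleR_add_left)
end

definition indvec :: "nat set \<Rightarrow> nat \<Rightarrow> real" where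
  "indvec S = (\<lambda>i. if i \<in> S then 1 else 0)"

definition unitvec :: "nat \<Rightarrow> nat \<Rightarrow> real" where
  "unitvec i = indvec {i}"

definition matroid_bases :: "nat \<Rightarrow> nat set set \<Rightarrow> bool" where
  "matroid_bases n \<B> \<longleftrightarrow>
     \<B> \<noteq> {} \<and> (\<forall>B\<in>\<B>. B \<subseteq> {1..n}) \<and>
     (\<forall>B1\<in>\<B>. \<forall>B2\<in>\<B>. \<forall>x\<in>B1 - B2. \<exists>y\<in>B2 - B1. insert y (B1 - {x}) \<in> \<B>)"

definition matroid_polytope :: "nat set set \<Rightarrow> (nat \<Rightarrow> real) set" where
  "matroid_polytope \<B> = convex hull (indvec ` \<B>)"

definition Delta :: "nat set \<Rightarrow> (nat \<Rightarrow> real) set" where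
  "Delta S = convex hull (unitvec ` S)"

definition Nabla :: "nat set \<Rightarrow> (nat \<Rightarrow> real) set" where
  "Nabla S = uminus ` Delta S"

definition dilate :: "real \<Rightarrow> 'a::real_vector set \<Rightarrow> 'a set" where
  "dilate c S = (\<lambda>x. c *\<^sub>R x) ` S"

definition msum :: "'a::plus set \<Rightarrow> 'a set \<Rightarrow> 'a set" where
  "msum A B = {a + b | a b. a \<in> A \<and> b \<in> B}"

definition liftA :: "nat \<Rightarrow> (nat \<Rightarrow> real) \<Rightarrow> real \<Rightarrow> ((nat \<Rightarrow> real) \<times> real) set" where
  "liftA n \<alpha> u = convex hull {(u *\<^sub>R unitvec i, \<alpha> i) | i. i \<in> {1..n}}"

definition liftP :: "nat set set \<Rightarrow> ((nat \<Rightarrow> real) \<times> real) set" where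
  "liftP \<B> = matroid_polytope \<B> \<times> {0}"

definition liftN :: "nat \<Rightarrow> (nat \<Rightarrow> real) \<Rightarrow> real \<Rightarrow> ((nat \<Rightarrow> real) \<times> real) set" where
  "liftN n \<beta> t = convex hull {(- t *\<^sub>R unitvec i, \<beta> i) | i. i \<in> {1..n}}"

definition Lift :: "nat \<Rightarrow> nat set set \<Rightarrow> (nat \<Rightarrow> real) \<Rightarrow> (nat \<Rightarrow> real) \<Rightarrow> real \<Rightarrow> real
                    \<Rightarrow> ((nat \<Rightarrow> real) \<times> real) set" where
  "Lift n \<B> \<alpha> \<beta> u t = msum (msum (liftA n \<alpha> u) (liftP \<B>)) (liftN n \<beta> t)"

definition lfun :: "nat \<Rightarrow> (nat \<Rightarrow> real) \<Rightarrow> (nat \<Rightarrow> real) \<times> real \<Rightarrow> real" where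
  "lfun n w p = (\<Sum>i\<in>{1..n}. w i * fst p i) - snd p"

definition maxface :: "nat \<Rightarrow> (nat \<Rightarrow> real) \<Rightarrow> ((nat \<Rightarrow> real) \<times> real) set
                       \<Rightarrow> ((nat \<Rightarrow> real) \<times> real) set" where
  "maxface n w S = {p \<in> S. \<forall>q\<in>S. lfun n w q \<le> lfun n w p}"

text \<open>Cells of the regular mixed subdivision: projections of lower faces of Lift.\<close>
definition cells :: "nat \<Rightarrow> nat set set \<Rightarrow> (nat \<Rightarrow> real) \<Rightarrow> (nat \<Rightarrow> real) \<Rightarrow> real \<Rightarrow> real
                     \<Rightarrow> (nat \<Rightarrow> real) set set" where
  "cells n \<B> \<alpha> \<beta> u t = {fst ` maxface n w (Lift n \<B> \<alpha> \<beta> u t) | w. True}"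

definition canonical_cell ::
  "nat \<Rightarrow> nat set set \<Rightarrow> (nat \<Rightarrow> real) \<Rightarrow> (nat \<Rightarrow> real) \<Rightarrow> real \<Rightarrow> real
   \<Rightarrow> (nat \<Rightarrow> real) set \<Rightarrow> (nat \<Rightarrow> real) set \<Rightarrow> (nat \<Rightarrow> real) set \<Rightarrow> bool" where
  "canonical_cell n \<B> \<alpha> \<beta> u t F G H \<longleftrightarrow>
     (\<exists>w. F = fst ` maxface n w (liftA n \<alpha> u) \<and>
          G = fst ` maxface n w (liftP \<B>) \<and>
          H = fst ` maxface n w (liftN n \<beta> t))"

definition top_degree_face ::
  "nat \<Rightarrow> nat set set \<Rightarrow> (nat \<Rightarrow> real) \<Rightarrow> (nat \<Rightarrow> real) \<Rightarrow> real \<Rightarrow> real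
   \<Rightarrow> (nat \<Rightarrow> real) set \<Rightarrow> (nat \<Rightarrow> real) set \<Rightarrow> (nat \<Rightarrow> real) set \<Rightarrow> bool" where
  "top_degree_face n \<B> \<alpha> \<beta> u t F G H \<longleftrightarrow>
     canonical_cell n \<B> \<alpha> \<beta> u t F G H \<and>
     (\<exists>v. G = {v} \<and> v extreme_point_of matroid_polytope \<B>) \<and>
     (\<forall>C\<in>cells n \<B> \<alpha> \<beta> u t. msum (msum F G) H \<subseteq> C \<longrightarrow> C = msum (msum F G) H)"

end

theory Submission
  imports Defs
begin

lemma lfun_split:
  "lfun n w (a,s) + lfun n w (g,z) + lfun n w (h,r) = lfun n w (a+g+h, 0) - (s+z+r)"
  by (simp add: lfun_def sum.distrib distrib_left algebra_simps)

lemma key: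
  assumes c1: "canonical_cell n \<B> \<alpha> \<beta> u t F1 {g1} H1"
    and c2: "canonical_cell n \<B> \<alpha> \<beta> u t F2 {g2} H2"
    and "a1 \<in> F1" "h1 \<in> H1" "a2 \<in> F2" "h2 \<in> H2"
    and eq: "a1 + g1 + h1 = a2 + g2 + h2"
  shows "g1 = g2"
proof -
  obtain w1 where F1: "F1 = fst ` maxface n w1 (liftA n \<alpha> u)"
    and G1: "{g1} = fst ` maxface n w1 (liftP \<B>)"
    and H1: "H1 = fst ` maxface n w1 (liftN n \<beta> t)"
    using c1 unfolding canonical_cell_def by blast
  obtain w2 where F2: "F2 = fst ` maxface n w2 (liftA n \<alpha> u)"
    and G2: "{g2} = fst ` maxface n w2 (liftP \<B>)"
    and H2: "H2 = fst ` maxface n w2 (liftN n \<beta> t)"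
    using c2 unfolding canonical_cell_def by blast
  obtain s1 where A1: "(a1,s1) \<in> maxface n w1 (liftA n \<alpha> u)" using assms(3) F1 by force
  obtain r1 where N1: "(h1,r1) \<in> maxface n w1 (liftN n \<beta> t)" using assms(4) H1 by force
  obtain s2 where A2: "(a2,s2) \<in> maxface n w2 (liftA n \<alpha> u)" using assms(5) F2 by force
  obtain r2 where N2: "(h2,r2) \<in> maxface n w2 (liftN n \<beta> t)" using assms(6) H2 by force
  have "g1 \<in> fst ` maxface n w1 (liftP \<B>)" using G1 by auto
  then obtain z1 where P1: "(g1,z1) \<in> maxface n w1 (liftP \<B>)" by force
  have "g2 \<in> fst ` maxface n w2 (liftP \<B>)" using G2 by auto
  then obtain z2 where P2: "(g2,z2) \<in> maxface n w2 (liftP \<B>)" by force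
  have z1: "z1 = 0" using P1 by (auto simp: maxface_def liftP_def)
  have z2: "z2 = 0" using P2 by (auto simp: maxface_def liftP_def)
  have mA1: "(a1,s1) \<in> liftA n \<alpha> u" "\<forall>q\<in>liftA n \<alpha> u. lfun n w1 q \<le> lfun n w1 (a1,s1)"
    using A1 by (auto simp: maxface_def)
  have mA2: "(a2,s2) \<in> liftA n \<alpha> u" "\<forall>q\<in>liftA n \<alpha> u. lfun n w2 q \<le> lfun n w2 (a2,s2)"
    using A2 by (auto simp: maxface_def)
  have mN1: "(h1,r1) \<in> liftN n \<beta> t" "\<forall>q\<in>liftN n \<beta> t. lfun n w1 q \<le> lfun n w1 (h1,r1)"
    using N1 by (auto simp: maxface_def)
  have mN2: "(h2,r2) \<in> liftN n \<beta> t" "\<forall>q\<in>liftN n \<beta> t. lfun n w2 q \<le> lfun n w2 (h2,r2)"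
    using N2 by (auto simp: maxface_def)
  have mP1: "(g1,z1) \<in> liftP \<B>" "\<forall>q\<in>liftP \<B>. lfun n w1 q \<le> lfun n w1 (g1,z1)"
    using P1 by (auto simp: maxface_def)
  have mP2: "(g2,z2) \<in> liftP \<B>" "\<forall>q\<in>liftP \<B>. lfun n w2 q \<le> lfun n w2 (g2,z2)"
    using P2 by (auto simp: maxface_def)
  have i1: "lfun n w1 (a2,s2) \<le> lfun n w1 (a1,s1)" using mA1 mA2 by blast
  have i2: "lfun n w1 (h2,r2) \<le> lfun n w1 (h1,r1)" using mN1 mN2 by blast
  have i3: "lfun n w1 (g2,z2) \<le> lfun n w1 (g1,z1)" using mP1 mP2 by blast
  have j1: "lfun n w2 (a1,s1) \<le> lfun n w2 (a2,s2)" using mA1 mA2 by blast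
  have j2: "lfun n w2 (h1,r1) \<le> lfun n w2 (h2,r2)" using mN1 mN2 by blast
  have j3: "lfun n w2 (g1,z1) \<le> lfun n w2 (g2,z2)" using mP1 mP2 by blast
  have e1: "a1+g1+h1 = a2+g2+h2" by (rule eq)
  note L1 = lfun_split[of n w1 a1 s1 g1 z1 h1 r1] lfun_split[of n w1 a2 s2 g2 z2 h2 r2]
  note L2 = lfun_split[of n w2 a1 s1 g1 z1 h1 r1] lfun_split[of n w2 a2 s2 g2 z2 h2 r2]
  have "lfun n w1 (g1,z1) \<le> lfun n w1 (g2,z2)"
    using L1 L2 i1 i2 i3 j1 j2 j3 e1 by (simp only: e1)
  then have "(g2,z2) \<in> maxface n w1 (liftP \<B>)"
    using mP1 mP2 unfolding maxface_def by force
  then have "g2 \<in> {g1}" using G1 by force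
  then show ?thesis by simp
qed

theorem mainTheorem8:
  fixes n :: nat and \<B> :: "nat set set" and \<alpha> \<beta> :: "nat \<Rightarrow> real" and t u :: nat
    and X1 Y1 X2 Y2 B1 B2 :: "nat set"
  assumes "1 \<le> n"
    and "matroid_bases n \<B>"
    and "0 < t" and "0 < u"
    and "0 < \<alpha> 1" and "\<And>i j. 1 \<le> i \<Longrightarrow> i < j \<Longrightarrow> j \<le> n \<Longrightarrow> \<alpha> i < \<alpha> j"
    and "0 < \<beta> 1" and "\<And>i j. 1 \<le> i \<Longrightarrow> i < j \<Longrightarrow> j \<le> n \<Longrightarrow> \<beta> i < \<beta> j"
    and "X1 \<union> Y1 = {2..n}" and "X1 \<inter> Y1 = {}"
    and "X2 \<union> Y2 = {2..n}" and "X2 \<inter> Y2 = {}"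
    and "(X1, Y1) \<noteq> (X2, Y2)"
    and "B1 \<in> \<B>" and "B2 \<in> \<B>"
    and "top_degree_face n \<B> \<alpha> \<beta> (real u) (real t)
           (dilate (real u) (Delta ({1} \<union> X1))) {indvec B1} (dilate (real t) (Nabla ({1} \<union> Y1)))"
    and "top_degree_face n \<B> \<alpha> \<beta> (real u) (real t)
           (dilate (real u) (Delta ({1} \<union> X2))) {indvec B2} (dilate (real t) (Nabla ({1} \<union> Y2)))"
    and "msum (msum {indvec B1} (dilate (real u) (Delta ({1} \<union> X1)))) (dilate (real t) (Nabla ({1} \<union> Y1)))
         \<inter> msum (msum {indvec B2} (dilate (real u) (Delta ({1} \<union> X2)))) (dilate (real t) (Nabla ({1} \<union> Y2)))
         \<noteq> {}"
  shows "B1 = B2"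
proof -
  obtain x where x1: "x \<in> msum (msum {indvec B1} (dilate (real u) (Delta ({1} \<union> X1)))) (dilate (real t) (Nabla ({1} \<union> Y1)))"
    and x2: "x \<in> msum (msum {indvec B2} (dilate (real u) (Delta ({1} \<union> X2)))) (dilate (real t) (Nabla ({1} \<union> Y2)))"
    using assms(18) by blast
  obtain a1 h1 where a1: "a1 \<in> dilate (real u) (Delta ({1} \<union> X1))" and h1: "h1 \<in> dilate (real t) (Nabla ({1} \<union> Y1))"
    and xe1: "x = indvec B1 + a1 + h1" using x1 unfolding msum_def by blast
  obtain a2 h2 where a2: "a2 \<in> dilate (real u) (Delta ({1} \<union> X2))" and h2: "h2 \<in> dilate (real t) (Nabla ({1} \<union> Y2))"
    and xe2: "x = indvec B2 + a2 + h2" using x2 unfolding msum_def by blast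
  have "indvec B1 = indvec B2"
    apply (rule key[OF _ _ a1 h1 a2 h2])
    using assms(16,17) xe1 xe2 by (auto simp: top_degree_face_def algebra_simps)
  then show ?thesis unfolding indvec_def by (metis (mono_tags) one_neq_zero subsetI subset_antisym)
qed

end
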